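(* Let $\Gamma$ be a distance-regular graph with classical parameters $(D,b,\alpha,\beta)$ such that $b\ge2$, $b-1\ge\alpha\ge1$ and $D\ge3$, geometric with respect to a set $\mathcal C$ of Delsarte cliques (so $\Gamma$ is the point graph of the partial linear space $(V(\Gamma),\mathcal C,\in)$; members of $\mathcal C$ are called lines). Let $r=[D]$ and assume $\Gamma$ satisfies the dual Pasch axiom. Then every two adjacent vertices $x,y$ lie in a unique assembly $M_{x,y}$, which has exactly $\alpha r+1$ vertices; consequently $\beta\ge\alpha r$, and each vertex lies in exactly $\frac{\beta}{\alpha}$ assemblies.
   Context: Distance-regular graph with intersection numbers $b_i,c_i$, valency $k=b_0$. For integer $b\ne1$, $[j]=\frac{b^j-1}{b-1}$. Classical parameters $(D,b,\alpha,\beta)$: diameter $D$, $b_i=([D]-[i])(\beta-\alpha[i])$, $c_i=[i](1+\alpha[i-1])$. A Delsarte clique is a clique with $1+\frac{k}{-\theta_{\min}}$ vertices, $\theta_{\min}$ the smallest adjacency eigenvalue; geometric with respect to $\mathcal C$ means every edge lies in exactly one member of $\mathcal C$. Dual Pasch axiom: for any two adjacent vertices $x,y$, the set of common neighbours of $x$ and $y$ not on the line through $x$ and $y$ is a clique. An assembly is a maximal clique of $\Gamma$ not in $\mathcal C$. *)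

theory Defs
  imports Main "HOL-Library.Disjoint_Sets" Complex_Main
begin

definition simple_graph :: "'a set \<Rightarrow> ('a \<Rightarrow> 'a \<Rightarrow> bool) \<Rightarrow> bool" where
  "simple_graph V E \<longleftrightarrow> finite V \<and> V \<noteq> {} \<and>
     (\<forall>x y. E x y \<longrightarrow> x \<in> V \<and> y \<in> V) \<and>
     (\<forall>x y. E x y \<longrightarrow> E y x) \<and> (\<forall>x. \<not> E x x)"

fun walk :: "('a \<Rightarrow> 'a \<Rightarrow> bool) \<Rightarrow> nat \<Rightarrow> 'a \<Rightarrow> 'a \<Rightarrow> bool" where
  "walk E 0 x y = (x = y)"
| "walk E (Suc n) x y = (\<exists>z. walk E n x z \<and> E z y)"

definition gdist :: "('a \<Rightarrow> 'a \<Rightarrow> bool) \<Rightarrow> 'a \<Rightarrow> 'a \<Rightarrow> nat" where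
  "gdist E x y = (LEAST n. walk E n x y)"

definition connected_graph :: "'a set \<Rightarrow> ('a \<Rightarrow> 'a \<Rightarrow> bool) \<Rightarrow> bool" where
  "connected_graph V E \<longleftrightarrow> (\<forall>x\<in>V. \<forall>y\<in>V. \<exists>n. walk E n x y)"

definition diameter :: "'a set \<Rightarrow> ('a \<Rightarrow> 'a \<Rightarrow> bool) \<Rightarrow> nat" where
  "diameter V E = Max {gdist E x y | x y. x \<in> V \<and> y \<in> V}"

definition distance_regular ::
  "'a set \<Rightarrow> ('a \<Rightarrow> 'a \<Rightarrow> bool) \<Rightarrow> (nat \<Rightarrow> nat) \<Rightarrow> (nat \<Rightarrow> nat) \<Rightarrow> bool" where
  "distance_regular V E bi ci \<longleftrightarrow> simple_graph V E \<and> connected_graph V E \<and>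
     (\<forall>x\<in>V. \<forall>y\<in>V. \<forall>i. gdist E x y = i \<longrightarrow>
        ci i = card {z\<in>V. E y z \<and> gdist E x z + 1 = i} \<and>
        bi i = card {z\<in>V. E y z \<and> gdist E x z = i + 1})"

definition gbr :: "int \<Rightarrow> nat \<Rightarrow> real" where
  "gbr b j = (real_of_int b ^ j - 1) / (real_of_int b - 1)"

definition classical_parameters ::
  "'a set \<Rightarrow> ('a \<Rightarrow> 'a \<Rightarrow> bool) \<Rightarrow> (nat \<Rightarrow> nat) \<Rightarrow> (nat \<Rightarrow> nat) \<Rightarrow>
   nat \<Rightarrow> int \<Rightarrow> real \<Rightarrow> real \<Rightarrow> bool" where
  "classical_parameters V E bi ci D b \<alpha> \<beta> \<longleftrightarrow>
     distance_regular V E bi ci \<and> diameter V E = D \<and> b \<noteq> 1 \<and>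
     (\<forall>i\<le>D. real (bi i) = (gbr b D - gbr b i) * (\<beta> - \<alpha> * gbr b i) \<and>
             real (ci i) = gbr b i * (1 + \<alpha> * gbr b (i - 1)))"

definition adj_eigenvalue :: "'a set \<Rightarrow> ('a \<Rightarrow> 'a \<Rightarrow> bool) \<Rightarrow> real \<Rightarrow> bool" where
  "adj_eigenvalue V E \<theta> \<longleftrightarrow> (\<exists>f :: 'a \<Rightarrow> real. (\<exists>x\<in>V. f x \<noteq> 0) \<and>
      (\<forall>x\<in>V. (\<Sum>y\<in>{y\<in>V. E x y}. f y) = \<theta> * f x))"

definition min_eigenvalue :: "'a set \<Rightarrow> ('a \<Rightarrow> 'a \<Rightarrow> bool) \<Rightarrow> real" where
  "min_eigenvalue V E = Min {\<theta>. adj_eigenvalue V E \<theta>}"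

definition is_clique :: "'a set \<Rightarrow> ('a \<Rightarrow> 'a \<Rightarrow> bool) \<Rightarrow> 'a set \<Rightarrow> bool" where
  "is_clique V E C \<longleftrightarrow> C \<subseteq> V \<and> (\<forall>x\<in>C. \<forall>y\<in>C. x \<noteq> y \<longrightarrow> E x y)"

definition maximal_clique :: "'a set \<Rightarrow> ('a \<Rightarrow> 'a \<Rightarrow> bool) \<Rightarrow> 'a set \<Rightarrow> bool" where
  "maximal_clique V E C \<longleftrightarrow> is_clique V E C \<and> (\<forall>C'. is_clique V E C' \<and> C \<subseteq> C' \<longrightarrow> C' = C)"

text \<open>Delsarte clique: a clique with 1 + k/(-\<theta>_min) vertices, k the valency.\<close>
definition delsarte_clique ::
  "'a set \<Rightarrow> ('a \<Rightarrow> 'a \<Rightarrow> bool) \<Rightarrow> nat \<Rightarrow> 'a set \<Rightarrow> bool" where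
  "delsarte_clique V E k C \<longleftrightarrow> is_clique V E C \<and>
     real (card C) = 1 + real k / (- min_eigenvalue V E)"

definition geometric ::
  "'a set \<Rightarrow> ('a \<Rightarrow> 'a \<Rightarrow> bool) \<Rightarrow> nat \<Rightarrow> 'a set set \<Rightarrow> bool" where
  "geometric V E k \<C> \<longleftrightarrow> (\<forall>C\<in>\<C>. delsarte_clique V E k C) \<and>
     (\<forall>x y. E x y \<longrightarrow> (\<exists>!C. C \<in> \<C> \<and> x \<in> C \<and> y \<in> C))"

definition line_through :: "'a set set \<Rightarrow> 'a \<Rightarrow> 'a \<Rightarrow> 'a set" where
  "line_through \<C> x y = (THE C. C \<in> \<C> \<and> x \<in> C \<and> y \<in> C)"

definition dual_pasch ::
  "'a set \<Rightarrow> ('a \<Rightarrow> 'a \<Rightarrow> bool) \<Rightarrow> 'a set set \<Rightarrow> bool" where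
  "dual_pasch V E \<C> \<longleftrightarrow> (\<forall>x y. E x y \<longrightarrow>
     is_clique V E {z\<in>V. E x z \<and> E y z \<and> z \<notin> line_through \<C> x y})"

definition assembly ::
  "'a set \<Rightarrow> ('a \<Rightarrow> 'a \<Rightarrow> bool) \<Rightarrow> 'a set set \<Rightarrow> 'a set \<Rightarrow> bool" where
  "assembly V E \<C> M \<longleftrightarrow> maximal_clique V E M \<and> M \<notin> \<C>"

end

theory Submission
  imports Defs "HOL-Computational_Algebra.Polynomial"
begin

lemma walk_prepend: "walk E n x y \<Longrightarrow> E w x \<Longrightarrow> walk E (Suc n) w y"
proof (induction n arbitrary: y)
  case 0 then show ?case by auto
next
  case (Suc n) then show ?case by (metis walk.simps(2))
qed

lemma walk_sym: "(\<forall>x y. E x y \<longrightarrow> E y x) \<Longrightarrow> walk E n x y \<Longrightarrow> walk E n y x"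
proof (induction n arbitrary: y)
  case 0 then show ?case by auto
next
  case (Suc n)
  then obtain z where "walk E n x z" "E z y" by auto
  then show ?case using Suc walk_prepend by metis
qed

lemma walk_trans: "walk E m x y \<Longrightarrow> walk E n y z \<Longrightarrow> walk E (m+n) x z"
proof (induction n arbitrary: z)
  case 0 then show ?case by auto
next
  case (Suc n)
  then obtain t where "walk E n y t" "E t z" by auto
  then show ?case using Suc by auto
qed

locale drg =
  fixes V :: "'a set" and E :: "'a \<Rightarrow> 'a \<Rightarrow> bool"
    and bi ci :: "nat \<Rightarrow> nat" and D :: nat
  assumes dr: "distance_regular V E bi ci" and diam: "diameter V E = D"
begin

abbreviation d where "d \<equiv> gdist E"
abbreviation nb where "nb y \<equiv> {z\<in>V. E y z}"

lemma sg: "simple_graph V E" using dr by (simp add: distance_regular_def)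
lemma finV: "finite V" using sg by (simp add: simple_graph_def)
lemma EV: "E x y \<Longrightarrow> x \<in> V \<and> y \<in> V" using sg by (simp add: simple_graph_def)
lemma Esym: "E x y \<Longrightarrow> E y x" using sg by (simp add: simple_graph_def)
lemma Eirr: "\<not> E x x" using sg by (simp add: simple_graph_def)
lemma conn: "x \<in> V \<Longrightarrow> y \<in> V \<Longrightarrow> \<exists>n. walk E n x y"
  using dr by (simp add: distance_regular_def connected_graph_def)
lemma drp: "x \<in> V \<Longrightarrow> y \<in> V \<Longrightarrow> d x y = i \<Longrightarrow>
        ci i = card {z\<in>V. E y z \<and> d x z + 1 = i} \<and>
        bi i = card {z\<in>V. E y z \<and> d x z = i + 1}"
  using dr unfolding distance_regular_def by blast

lemma walk_d: "x \<in> V \<Longrightarrow> y \<in> V \<Longrightarrow> walk E (d x y) x y"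
  unfolding gdist_def using conn by (meson LeastI_ex)
lemma d_le: "walk E n x y \<Longrightarrow> d x y \<le> n"
  unfolding gdist_def by (rule Least_le)
lemma d_refl[simp]: "d x x = 0"
  using d_le[of 0 x x] by simp
lemma d0: "x \<in> V \<Longrightarrow> y \<in> V \<Longrightarrow> d x y = 0 \<Longrightarrow> x = y"
  using walk_d[of x y] by simp
lemma d_sym: "x \<in> V \<Longrightarrow> y \<in> V \<Longrightarrow> d x y = d y x"
proof -
  have *: "d a c \<le> d c a" if "a \<in> V" "c \<in> V" for a c
    using walk_sym[OF _ walk_d[OF that(2,1)]] Esym d_le by blast
  assume "x \<in> V" "y \<in> V" then show ?thesis using *[of x y] *[of y x] by simp
qed
lemma d_E: "E x y \<Longrightarrow> d x y = 1"
proof -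
  assume e: "E x y"
  have "walk E 1 x y" using e by simp
  then have "d x y \<le> 1" by (rule d_le)
  moreover have "d x y \<noteq> 0" using e d0 EV Eirr by metis
  ultimately show ?thesis by simp
qed
lemma d1_E: "d x y = 1 \<Longrightarrow> x \<in> V \<Longrightarrow> y \<in> V \<Longrightarrow> E x y"
  using walk_d[of x y] by simp
lemma d_step: "x \<in> V \<Longrightarrow> E y z \<Longrightarrow> d x z \<le> d x y + 1"
proof -
  assume x: "x \<in> V" and e: "E y z"
  have "walk E (Suc (d x y)) x z" using walk_d[OF x] EV[OF e] e by auto
  then show ?thesis using d_le by fastforce
qed
lemma d_step2: "x \<in> V \<Longrightarrow> E y z \<Longrightarrow> d x y \<le> d x z + 1"
  using d_step Esym by blast

lemma d_le_D: "x \<in> V \<Longrightarrow> y \<in> V \<Longrightarrow> d x y \<le> D"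
proof -
  assume "x \<in> V" "y \<in> V"
  have fin: "finite {gdist E x y | x y. x \<in> V \<and> y \<in> V}"
  proof -
    have "{gdist E x y | x y. x \<in> V \<and> y \<in> V} = (\<lambda>(x,y). d x y) ` (V \<times> V)" by auto
    then show ?thesis using finV by simp
  qed
  show ?thesis using diam unfolding diameter_def
    using Max_ge[OF fin] \<open>x \<in> V\<close> \<open>y \<in> V\<close> by blast
qed

lemma Vne: "V \<noteq> {}" using sg by (simp add: simple_graph_def)

lemma D_attained: "\<exists>x\<in>V. \<exists>y\<in>V. d x y = D"
proof -
  have eq: "{gdist E x y | x y. x \<in> V \<and> y \<in> V} = (\<lambda>(x,y). d x y) ` (V \<times> V)" by auto
  have fin: "finite {gdist E x y | x y. x \<in> V \<and> y \<in> V}" unfolding eq using finV by simp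
  have ne: "{gdist E x y | x y. x \<in> V \<and> y \<in> V} \<noteq> {}" using Vne by blast
  have "D \<in> {gdist E x y | x y. x \<in> V \<and> y \<in> V}"
    using Max_in[OF fin ne] diam unfolding diameter_def by simp
  then show ?thesis by blast
qed

lemma d_pred: "x \<in> V \<Longrightarrow> y \<in> V \<Longrightarrow> d x y = Suc n \<Longrightarrow> \<exists>z\<in>V. E z y \<and> d x z = n"
proof -
  assume x: "x \<in> V" and y: "y \<in> V" and n: "d x y = Suc n"
  from walk_d[OF x y] n obtain z where w: "walk E n x z" and e: "E z y" by auto
  have "d x z \<le> n" using d_le[OF w] .
  moreover have "d x y \<le> d x z + 1" using d_step[OF x e] .
  ultimately show ?thesis using n e EV[OF e] by auto
qed

definition kk where "kk = bi 0"

lemma card_nb: "y \<in> V \<Longrightarrow> card (nb y) = kk"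
proof -
  assume y: "y \<in> V"
  have "bi 0 = card {z\<in>V. E y z \<and> d y z = 0 + 1}" using drp[OF y y] by simp
  also have "{z\<in>V. E y z \<and> d y z = 0 + 1} = nb y" using d_E by auto
  finally show ?thesis by (simp add: kk_def)
qed

lemma ci0: "x \<in> V \<Longrightarrow> ci 0 = 0"
  using drp[of x x 0] by simp

lemma finnb: "finite (nb y)" using finV by simp

lemma nb_split:
  assumes x: "x \<in> V" and y: "y \<in> V" and i: "d x y = i"
  shows "(\<Sum>z\<in>nb y. h (d x z)) = real (ci i) * h (i - 1)
           + (real kk - real (bi i) - real (ci i)) * h i + real (bi i) * h (i + 1)"
proof -
  let ?P1 = "{z\<in>V. E y z \<and> d x z + 1 = i}"
  let ?P2 = "{z\<in>V. E y z \<and> d x z = i}"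
  let ?P3 = "{z\<in>V. E y z \<and> d x z = i + 1}"
  have range: "z \<in> nb y \<Longrightarrow> d x z + 1 = i \<or> d x z = i \<or> d x z = i + 1" for z
    using d_step[OF x, of y z] d_step2[OF x, of y z] i by auto
  have un: "nb y = ?P1 \<union> ?P2 \<union> ?P3" using range by auto
  have f1: "finite ?P1" "finite ?P2" "finite ?P3" using finV by auto
  have dj: "?P1 \<inter> ?P2 = {}" "(?P1 \<union> ?P2) \<inter> ?P3 = {}" by auto
  have c1: "card ?P1 = ci i" and c3: "card ?P3 = bi i" using drp[OF x y i] by auto
  have "card (nb y) = card ?P1 + card ?P2 + card ?P3"
    unfolding un using f1 dj by (simp add: card_Un_disjoint)
  then have c2: "real (card ?P2) = real kk - real (bi i) - real (ci i)"
    using card_nb[OF y] c1 c3 by simp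
  have s1: "(\<Sum>z\<in>?P1. h (d x z)) = real (ci i) * h (i - 1)"
  proof -
    have "(\<Sum>z\<in>?P1. h (d x z)) = (\<Sum>z\<in>?P1. h (i - 1))"
      by (rule sum.cong) auto
    then show ?thesis using c1 by simp
  qed
  have s2: "(\<Sum>z\<in>?P2. h (d x z)) = real (card ?P2) * h i"
  proof -
    have "(\<Sum>z\<in>?P2. h (d x z)) = (\<Sum>z\<in>?P2. h i)"
      by (rule sum.cong) auto
    then show ?thesis by simp
  qed
  have s3: "(\<Sum>z\<in>?P3. h (d x z)) = real (bi i) * h (i + 1)"
  proof -
    have "(\<Sum>z\<in>?P3. h (d x z)) = (\<Sum>z\<in>?P3. h (i + 1))"
      by (rule sum.cong) auto
    then show ?thesis using c3 by simp
  qed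
  have "(\<Sum>z\<in>nb y. h (d x z)) = (\<Sum>z\<in>?P1. h (d x z)) + (\<Sum>z\<in>?P2. h (d x z)) + (\<Sum>z\<in>?P3. h (d x z))"
    unfolding un using f1 dj by (simp add: sum.union_disjoint)
  then show ?thesis using s1 s2 s3 c2 by simp
qed

definition sph where "sph x i = {z\<in>V. d x z = i}"
definition Ssum where "Ssum w x i = (\<Sum>z\<in>sph x i. w z)"

lemma cnt_real:
  assumes x: "x \<in> V" and t: "t \<in> V"
  shows "real (card {z\<in>V. E t z \<and> d x z = i}) =
     (if d x t = i + 1 then real (ci (i+1)) else 0) +
     (if d x t = i then real kk - real (bi i) - real (ci i) else 0) +
     (if d x t + 1 = i then real (bi (i - 1)) else 0)"
proof -
  let ?j = "d x t"
  let ?h = "\<lambda>m. if m = i then (1::real) else 0"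
  have "(\<Sum>z\<in>nb t. ?h (d x z)) = real (ci ?j) * ?h (?j - 1)
           + (real kk - real (bi ?j) - real (ci ?j)) * ?h ?j + real (bi ?j) * ?h (?j + 1)"
    by (rule nb_split[OF x t refl])
  moreover have "(\<Sum>z\<in>nb t. ?h (d x z)) = real (card {z\<in>V. E t z \<and> d x z = i})"
  proof -
    have "(\<Sum>z\<in>nb t. ?h (d x z)) = (\<Sum>z\<in>{z\<in>nb t. d x z = i}. 1)"
      by (rule sum.inter_filter[OF finnb, symmetric])
    also have "{z\<in>nb t. d x z = i} = {z\<in>V. E t z \<and> d x z = i}" by auto
    finally show ?thesis by simp
  qed
  moreover have "ci 0 = 0" using ci0[OF x] .
  ultimately show ?thesis
    by (cases "?j = 0") (auto split: if_splits)
qed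

lemma sphere_rec:
  assumes eig: "\<forall>z\<in>V. (\<Sum>t\<in>nb z. w t) = \<theta> * w z" and x: "x \<in> V"
  shows "\<theta> * Ssum w x i = real (ci (i+1)) * Ssum w x (i+1)
     + (real kk - real (bi i) - real (ci i)) * Ssum w x i
     + (if i \<ge> 1 then real (bi (i-1)) * Ssum w x (i-1) else 0)"
proof -
  let ?cnt = "\<lambda>t. real (card {z\<in>V. E t z \<and> d x z = i})"
  have fs: "finite (sph x i)" using finV by (simp add: sph_def)
  have "\<theta> * Ssum w x i = (\<Sum>z\<in>sph x i. \<theta> * w z)"
    by (simp add: Ssum_def sum_distrib_left)
  also have "\<dots> = (\<Sum>z\<in>sph x i. \<Sum>t\<in>{t\<in>V. E z t}. w t)"
    using eig by (intro sum.cong) (auto simp: sph_def)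
  also have "\<dots> = (\<Sum>t\<in>V. \<Sum>z\<in>{z\<in>sph x i. E z t}. w t)"
    by (rule sum.swap_restrict[OF fs finV])
  also have "\<dots> = (\<Sum>t\<in>V. w t * ?cnt t)"
  proof (rule sum.cong)
    fix t assume "t \<in> V"
    have "{z\<in>sph x i. E z t} = {z\<in>V. E t z \<and> d x z = i}"
      using Esym by (auto simp: sph_def)
    then show "(\<Sum>z\<in>{z\<in>sph x i. E z t}. w t) = w t * ?cnt t" by simp
  qed simp
  also have "\<dots> = (\<Sum>t\<in>V. (if d x t = i + 1 then real (ci (i+1)) * w t else 0)
      + (if d x t = i then (real kk - real (bi i) - real (ci i)) * w t else 0)
      + (if d x t + 1 = i then real (bi (i - 1)) * w t else 0))"
    by (intro sum.cong refl) (simp add: cnt_real[OF x] algebra_simps)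
  also have "\<dots> = real (ci (i+1)) * Ssum w x (i+1)
     + (real kk - real (bi i) - real (ci i)) * Ssum w x i
     + (if i \<ge> 1 then real (bi (i-1)) * Ssum w x (i-1) else 0)"
  proof -
    have a: "(\<Sum>t\<in>V. if d x t = m then c * w t else 0) = c * Ssum w x m" for m c
      using finV by (simp add: Ssum_def sph_def sum.inter_filter[symmetric] sum_distrib_left)
    have b: "(\<Sum>t\<in>V. if d x t + 1 = i then c * w t else 0) = (if i \<ge> 1 then c * Ssum w x (i-1) else 0)" for c
    proof (cases "i \<ge> 1")
      case True
      have "(\<Sum>t\<in>V. if d x t + 1 = i then c * w t else 0) = (\<Sum>t\<in>V. if d x t = i - 1 then c * w t else 0)"
        using True by (intro sum.cong) auto
      then show ?thesis using a True by simp
    next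
      case False then show ?thesis by simp
    qed
    show ?thesis by (simp only: sum.distrib a b)
  qed
  finally show ?thesis .
qed

lemma sph0: "x \<in> V \<Longrightarrow> sph x 0 = {x}"
  using d0 by (auto simp: sph_def)

lemma sph_big: "x \<in> V \<Longrightarrow> D < i \<Longrightarrow> sph x i = {}"
  using d_le_D by (fastforce simp: sph_def)

end

lemma gbr0[simp]: "gbr b 0 = 0" by (simp add: gbr_def)
lemma gbr1: "b \<ge> 2 \<Longrightarrow> gbr b 1 = 1" by (simp add: gbr_def)
lemma gbr_Suc: "b \<ge> 2 \<Longrightarrow> gbr b (Suc i) = real_of_int b * gbr b i + 1"
proof -
  assume "b \<ge> 2"
  then have "real_of_int b - 1 \<noteq> 0" by simp
  then show ?thesis by (simp add: gbr_def field_simps)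
qed
lemma gbr_mono: assumes "b \<ge> 2" and "i < j" shows "gbr b i < gbr b j"
proof -
  have nn: "gbr b n \<ge> 0" for n
  proof (induction n)
    case 0 then show ?case by simp
  next
    case (Suc n) then show ?case using gbr_Suc[OF assms(1)] assms(1) by simp
  qed
  have "gbr b n < gbr b (Suc n)" for n
  proof -
    have "real_of_int b * gbr b n \<ge> gbr b n" using nn[of n] assms(1)
      by (simp add: mult_right_mono[of 1 "real_of_int b" "gbr b n", simplified])
    then show ?thesis using gbr_Suc[OF assms(1)] by simp
  qed
  then show ?thesis using lift_Suc_mono_less[of "gbr b"] assms(2) by blast
qed
lemma gbr_nonneg: "b \<ge> 2 \<Longrightarrow> gbr b i \<ge> 0"
  using gbr_mono[of b 0 i] by (cases i) auto
lemma gbr_mono_le: "b \<ge> 2 \<Longrightarrow> i \<le> j \<Longrightarrow> gbr b i \<le> gbr b j"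
  using gbr_mono[of b i j] by (cases "i = j") auto

locale cls = drg V E bi ci D for V :: "'a set" and E bi ci D +
  fixes b :: int and \<alpha> \<beta> :: real
  assumes cp: "classical_parameters V E bi ci D b \<alpha> \<beta>"
    and b2: "b \<ge> 2" and \<alpha>1: "1 \<le> \<alpha>" and D3: "D \<ge> 3"
begin

abbreviation g where "g \<equiv> gbr b"
definition R where "R = gbr b D"
definition Bf where "Bf i = (R - g i) * (\<beta> - \<alpha> * g i)"
definition Cf where "Cf i = g i * (1 + \<alpha> * g (i - 1))"
definition Af where "Af i = R * \<beta> - Bf i - Cf i"

lemma bi_f: "i \<le> D \<Longrightarrow> real (bi i) = Bf i"
  using cp by (simp add: classical_parameters_def Bf_def R_def)
lemma ci_f: "i \<le> D \<Longrightarrow> real (ci i) = Cf i"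
  using cp by (simp add: classical_parameters_def Cf_def)
lemma kk_f: "real kk = R * \<beta>"
  using bi_f[of 0] by (simp add: kk_def Bf_def)
lemma g1: "g 1 = 1" using gbr1[OF b2] .
lemma gpos: "i \<ge> 1 \<Longrightarrow> g i > 0" using gbr_mono[OF b2, of 0 i] by simp
lemma gnn: "g i \<ge> 0" using gbr_nonneg[OF b2] .
lemma glt: "i < j \<Longrightarrow> g i < g j" using gbr_mono[OF b2] .
lemma gle: "i \<le> j \<Longrightarrow> g i \<le> g j" using gbr_mono_le[OF b2] .
lemma R_gt: "i < D \<Longrightarrow> g i < R" using glt by (simp add: R_def)
lemma R_gt1: "R > 1" using R_gt[of 1] D3 g1 by simp
lemma Cf_pos: "i \<ge> 1 \<Longrightarrow> Cf i > 0"
proof -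
  assume "i \<ge> 1"
  then have "g i > 0" using gpos by blast
  moreover have "1 + \<alpha> * g (i - 1) > 0" using gnn[of "i-1"] \<alpha>1 by (simp add: add_pos_nonneg)
  ultimately show ?thesis unfolding Cf_def by (rule mult_pos_pos)
qed
lemma Cf1: "Cf 1 = 1" using g1 by (simp add: Cf_def)
lemma Bf_nn: "i \<le> D \<Longrightarrow> Bf i \<ge> 0" using bi_f[of i] by (metis of_nat_0_le_iff)

lemma bDm1: "Bf (D - 1) \<ge> 1"
proof -
  obtain x y where x: "x \<in> V" and y: "y \<in> V" and dxy: "d x y = D" using D_attained by blast
  have "d x y = Suc (D - 1)" using dxy D3 by simp
  then obtain z where z: "z \<in> V" "E z y" "d x z = D - 1" using d_pred[OF x y] by blast
  have "bi (D-1) = card {w\<in>V. E z w \<and> d x w = D - 1 + 1}" using drp[OF x z(1) z(3)] by blast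
  moreover have "y \<in> {w\<in>V. E z w \<and> d x w = D - 1 + 1}" using y z dxy D3 by simp
  moreover have "finite {w\<in>V. E z w \<and> d x w = D - 1 + 1}" using finV by simp
  ultimately have "card {w\<in>V. E z w \<and> d x w = D - 1 + 1} > 0"
    using card_gt_0_iff by blast
  then have "bi (D-1) \<ge> 1" using \<open>bi (D-1) = _\<close> by simp
  then show ?thesis using bi_f[of "D-1"] by simp
qed

lemma beta_big: "i < D \<Longrightarrow> \<beta> - \<alpha> * g i > 0"
proof -
  assume i: "i < D"
  have "(R - g (D-1)) * (\<beta> - \<alpha> * g (D-1)) \<ge> 1" using bDm1 by (simp add: Bf_def)
  moreover have "R - g (D-1) > 0" using R_gt[of "D-1"] D3 by simp
  ultimately have "\<beta> - \<alpha> * g (D-1) > 0"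
    using zero_less_mult_pos[of "R - g (D-1)" "\<beta> - \<alpha> * g (D-1)"] by linarith
  moreover have "\<alpha> * g i \<le> \<alpha> * g (D-1)" using gle[of i "D-1"] i \<alpha>1 by simp
  ultimately show ?thesis by simp
qed
lemma beta_pos: "\<beta> > 0" using beta_big[of 0] D3 by simp

fun Wq :: "real \<Rightarrow> nat \<Rightarrow> real" where
  "Wq l 0 = 1"
| "Wq l (Suc 0) = l"
| "Wq l (Suc (Suc i)) = ((l + Af (Suc i)) * Wq l (Suc i) - Bf i * Wq l i) / Cf (Suc (Suc i))"

lemma Af_real: "i \<le> D \<Longrightarrow> real kk - real (bi i) - real (ci i) = Af i"
  using bi_f ci_f kk_f by (simp add: Af_def)

lemma S_W:
  assumes eig: "\<forall>z\<in>V. (\<Sum>t\<in>nb z. w t) = \<theta> * w z" and x: "x \<in> V"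
  shows "i \<le> D \<Longrightarrow> Ssum w x i = (-1)^i * Wq (-\<theta>) i * w x"
proof (induction i rule: less_induct)
  case (less i)
  have "i = 0 \<or> i = 1 \<or> (\<exists>j. i = Suc (Suc j))" by presburger
  then show ?case
  proof (elim disjE exE)
    assume "i = 0" then show ?thesis using sph0[OF x] by (simp add: Ssum_def)
  next
    assume i1: "i = 1"
    have "\<theta> * Ssum w x 0 = real (ci 1) * Ssum w x 1 + (real kk - real (bi 0) - real (ci 0)) * Ssum w x 0"
      using sphere_rec[OF eig x, of 0] by simp
    moreover have "real (ci 1) = 1" using ci_f[of 1] Cf1 D3 by simp
    moreover have "ci 0 = 0" using ci0[OF x] .
    moreover have "Ssum w x 0 = w x" using sph0[OF x] by (simp add: Ssum_def)
    ultimately show ?thesis using i1 by (simp add: kk_def)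
  next
    fix j assume ij: "i = Suc (Suc j)"
    have rec: "\<theta> * Ssum w x (Suc j) = real (ci (Suc (Suc j))) * Ssum w x (Suc (Suc j))
       + (real kk - real (bi (Suc j)) - real (ci (Suc j))) * Ssum w x (Suc j)
       + real (bi j) * Ssum w x j"
      using sphere_rec[OF eig x, of "Suc j"] by simp
    have D1: "Suc (Suc j) \<le> D" using less.prems ij by simp
    have rec2: "\<theta> * Ssum w x (Suc j) = Cf (Suc (Suc j)) * Ssum w x (Suc (Suc j))
       + Af (Suc j) * Ssum w x (Suc j) + Bf j * Ssum w x j"
      using rec ci_f[OF D1] Af_real[of "Suc j"] bi_f[of j] D1 by simp
    have C: "Cf (Suc (Suc j)) > 0" using Cf_pos by simp
    have IH1: "Ssum w x (Suc j) = (-1)^(Suc j) * Wq (-\<theta>) (Suc j) * w x"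
      using less.IH[of "Suc j"] ij D1 by simp
    have IH0: "Ssum w x j = (-1)^j * Wq (-\<theta>) j * w x"
      using less.IH[of j] ij D1 by simp
    have "Ssum w x (Suc (Suc j)) = ((\<theta> - Af (Suc j)) * Ssum w x (Suc j) - Bf j * Ssum w x j) / Cf (Suc (Suc j))"
      using rec2 C by (simp add: field_simps)
    also have "\<dots> = (-1)^(Suc (Suc j)) * Wq (-\<theta>) (Suc (Suc j)) * w x"
      unfolding IH1 IH0 using C by (simp add: field_simps)
    finally show ?thesis using ij by simp
  qed
qed

lemma terminal:
  assumes eig: "\<forall>z\<in>V. (\<Sum>t\<in>nb z. w t) = \<theta> * w z" and x: "x \<in> V"
  shows "(-\<theta> + Af D) * Wq (-\<theta>) D * w x = Bf (D - 1) * Wq (-\<theta>) (D - 1) * w x"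
proof -
  obtain m where m: "D = Suc m" using D3 by (cases D) auto
  have "Ssum w x (Suc D) = 0" using sph_big[OF x, of "Suc D"] by (simp add: Ssum_def)
  then have "\<theta> * Ssum w x D = (real kk - real (bi D) - real (ci D)) * Ssum w x D
     + real (bi (D - 1)) * Ssum w x (D - 1)"
    using sphere_rec[OF eig x, of D] D3 by simp
  then have "\<theta> * Ssum w x D = Af D * Ssum w x D + Bf (D - 1) * Ssum w x (D - 1)"
    using Af_real[of D] bi_f[of "D-1"] by simp
  moreover have "Ssum w x D = (-1)^D * Wq (-\<theta>) D * w x" using S_W[OF eig x] by simp
  moreover have "Ssum w x (D-1) = (-1)^(D-1) * Wq (-\<theta>) (D-1) * w x" using S_W[OF eig x] by simp
  ultimately have "\<theta> * ((-1)^D * Wq (-\<theta>) D * w x) = Af D * ((-1)^D * Wq (-\<theta>) D * w x)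
      + Bf (D - 1) * ((-1)^(D-1) * Wq (-\<theta>) (D-1) * w x)" by simp
  then have "\<theta> * (- ((-1)^m * Wq (-\<theta>) D * w x)) = Af D * (- ((-1)^m * Wq (-\<theta>) D * w x))
      + Bf (D - 1) * ((-1)^m * Wq (-\<theta>) (D-1) * w x)" using m by simp
  then have "(-1)^m * ((-\<theta> + Af D) * Wq (-\<theta>) D * w x) = (-1)^m * (Bf (D - 1) * Wq (-\<theta>) (D - 1) * w x)"
    by (simp add: algebra_simps)
  moreover have "((-1::real)^m) \<noteq> 0" by simp
  ultimately show ?thesis by simp
qed

lemma sturm:
  assumes l: "l > R"
  shows "j < D \<Longrightarrow> Wq l j > 0 \<and> g (Suc j) * Wq l (Suc j) > (R - g j) * Wq l j"
proof (induction j)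
  case 0 then show ?case using l g1 by simp
next
  case (Suc j)
  let ?W0 = "Wq l j" and ?W1 = "Wq l (Suc j)" and ?W2 = "Wq l (Suc (Suc j))"
  have IH: "?W0 > 0" "g (Suc j) * ?W1 > (R - g j) * ?W0" using Suc by auto
  have Rg: "R - g j > 0" using R_gt[of j] Suc.prems by simp
  have gS: "g (Suc j) > 0" using gpos by simp
  have "(R - g j) * ?W0 > 0" using Rg IH(1) by simp
  then have "g (Suc j) * ?W1 > 0" using IH(2) by linarith
  then have W1: "?W1 > 0" using gS by (simp add: zero_less_mult_iff)
  have bet: "\<beta> - \<alpha> * g j > 0" using beta_big[of j] Suc.prems by simp
  let ?Q = "1 + \<alpha> * g (Suc j)"
  have Q: "?Q > 0" using gnn[of "Suc j"] \<alpha>1 by (simp add: add_pos_nonneg)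
  let ?X = "\<beta> - \<alpha> * g j"
  have BW: "Bf j * ?W0 < ?X * (g (Suc j) * ?W1)"
  proof -
    have "Bf j * ?W0 = ?X * ((R - g j) * ?W0)" by (simp add: Bf_def)
    also have "\<dots> < ?X * (g (Suc j) * ?W1)"
      using IH(2) bet by (rule mult_strict_left_mono)
    finally show ?thesis .
  qed
  have lW: "l * ?W1 > R * ?W1" using l W1 by simp
  have ident: "R + Af (Suc j) - ?X * g (Suc j) = ?Q * (R - g (Suc j))"
    by (simp add: Af_def Bf_def Cf_def algebra_simps)
  let ?N = "(l + Af (Suc j)) * ?W1 - Bf j * ?W0"
  have e1: "(l + Af (Suc j)) * ?W1 = l * ?W1 + Af (Suc j) * ?W1" by (simp add: distrib_right)
  have e2: "?Q * (R - g (Suc j)) * ?W1 = R * ?W1 + Af (Suc j) * ?W1 - ?X * (g (Suc j) * ?W1)"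
  proof -
    have "?Q * (R - g (Suc j)) * ?W1 = (R + Af (Suc j) - ?X * g (Suc j)) * ?W1" using ident by simp
    also have "\<dots> = R * ?W1 + Af (Suc j) * ?W1 - ?X * (g (Suc j) * ?W1)"
      by (simp add: left_diff_distrib distrib_right)
    finally show ?thesis .
  qed
  have num: "?N > ?Q * ((R - g (Suc j)) * ?W1)"
    using e1 e2 BW lW by (simp only: mult.assoc[symmetric])
  have C2: "Cf (Suc (Suc j)) = g (Suc (Suc j)) * ?Q" by (simp add: Cf_def)
  have gSS: "g (Suc (Suc j)) > 0" using gpos by simp
  have W2: "?W2 = ?N / (g (Suc (Suc j)) * ?Q)" by (simp add: C2)
  have "g (Suc (Suc j)) * ?W2 = ?N / ?Q" unfolding W2 using gSS by simp
  also have "?N / ?Q > (R - g (Suc j)) * ?W1"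
    using num Q by (simp add: pos_less_divide_eq mult.commute)
  finally show ?case using IH(1) W1 by simp
qed

lemma sturm_term:
  assumes l: "l > R"
  shows "(l + Af D) * Wq l D - Bf (D - 1) * Wq l (D - 1) > 0"
proof -
  obtain m where m: "D = Suc m" using D3 by (cases D) auto
  have st: "Wq l m > 0" "g D * Wq l D > (R - g m) * Wq l m" using sturm[OF l, of m] m by auto
  have gD: "g D = R" by (simp add: R_def)
  have Rg: "R - g m > 0" using R_gt[of m] m by simp
  have WD: "Wq l D > 0" using st Rg gD R_gt1
    by (smt (verit, best) mult_pos_pos zero_less_mult_iff)
  have bet: "\<beta> - \<alpha> * g m > 0" using beta_big[of m] m by simp
  have BW: "Bf m * Wq l m < (\<beta> - \<alpha> * g m) * (R * Wq l D)"
  proof -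
    have "Bf m * Wq l m = (\<beta> - \<alpha> * g m) * ((R - g m) * Wq l m)" by (simp add: Bf_def algebra_simps)
    also have "\<dots> < (\<beta> - \<alpha> * g m) * (R * Wq l D)"
      using st(2) gD bet by (intro mult_strict_left_mono) auto
    finally show ?thesis .
  qed
  have Dm: "D - 1 = m" using m by simp
  have AD: "Af D = R * \<beta> - R * (1 + \<alpha> * g m)"
    unfolding Af_def Bf_def Cf_def Dm gD by simp
  have "(l + Af D) * Wq l D - Bf m * Wq l m > (R + Af D) * Wq l D - (\<beta> - \<alpha> * g m) * (R * Wq l D)"
    using BW l WD by (smt (verit) mult_strict_right_mono)
  also have "(R + Af D) * Wq l D - (\<beta> - \<alpha> * g m) * (R * Wq l D) = 0"
    unfolding AD by (simp add: algebra_simps)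
  finally show ?thesis using m by simp
qed

lemma eig_ge: "adj_eigenvalue V E \<theta> \<Longrightarrow> \<theta> \<ge> -R"
proof (rule ccontr)
  assume "adj_eigenvalue V E \<theta>" and nt: "\<not> \<theta> \<ge> -R"
  then obtain f x where x: "x \<in> V" "f x \<noteq> 0" and eig: "\<forall>z\<in>V. (\<Sum>t\<in>nb z. f t) = \<theta> * f z"
    unfolding adj_eigenvalue_def by blast
  have "(-\<theta> + Af D) * Wq (-\<theta>) D * f x = Bf (D - 1) * Wq (-\<theta>) (D - 1) * f x"
    using terminal[OF eig x(1)] .
  then have "((-\<theta> + Af D) * Wq (-\<theta>) D - Bf (D - 1) * Wq (-\<theta>) (D - 1)) * f x = 0"
    by (simp add: algebra_simps)
  then have "(-\<theta> + Af D) * Wq (-\<theta>) D - Bf (D - 1) * Wq (-\<theta>) (D - 1) = 0" using x(2) by simp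
  moreover have "-\<theta> > R" using nt by simp
  ultimately show False using sturm_term[of "-\<theta>"] by simp
qed

fun pW :: "nat \<Rightarrow> real poly" where
  "pW 0 = 1"
| "pW (Suc 0) = [:0, 1:]"
| "pW (Suc (Suc i)) = smult (1 / Cf (Suc (Suc i))) ([:Af (Suc i), 1:] * pW (Suc i) - smult (Bf i) (pW i))"

lemma poly_pW: "poly (pW i) l = Wq l i"
  by (induction i rule: pW.induct) (simp_all add: algebra_simps diff_divide_distrib add_divide_distrib)

lemma deg_pW: "degree (pW i) = i"
proof (induction i rule: pW.induct)
  case 1 then show ?case by simp
next
  case 2 then show ?case by simp
next
  case (3 i)
  have ne: "pW (Suc i) \<noteq> 0" using "3.IH"(1) by (metis nat.distinct(1) degree_0)
  have d1: "degree ([:Af (Suc i), 1:] * pW (Suc i)) = Suc (Suc i)"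
    using degree_mult_eq[of "[:Af (Suc i), 1:]" "pW (Suc i)"] ne "3.IH"(1) by simp
  have d2: "degree (smult (Bf i) (pW i)) < Suc (Suc i)" using "3.IH"(2) by simp
  have "degree ([:Af (Suc i), 1:] * pW (Suc i) - smult (Bf i) (pW i)) = Suc (Suc i)"
    using degree_add_eq_left[of "- smult (Bf i) (pW i)" "[:Af (Suc i), 1:] * pW (Suc i)"] d1 d2
    by simp
  moreover have "1 / Cf (Suc (Suc i)) \<noteq> 0" using Cf_pos[of "Suc (Suc i)"] by simp
  ultimately show ?case by simp
qed

lemma eig_finite: "finite {\<theta>. adj_eigenvalue V E \<theta>}"
proof -
  define Tp where "Tp = [:Af D, 1:] * pW D - smult (Bf (D - 1)) (pW (D - 1))"
  have ne: "pW D \<noteq> 0" using deg_pW[of D] D3 by (metis degree_0 not_numeral_le_zero)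
  have d1: "degree ([:Af D, 1:] * pW D) = Suc D"
    using degree_mult_eq[of "[:Af D, 1:]" "pW D"] ne deg_pW[of D] by simp
  have d2: "degree (smult (Bf (D - 1)) (pW (D - 1))) < Suc D" using deg_pW[of "D-1"] by auto
  have "degree Tp = Suc D" unfolding Tp_def
    using degree_add_eq_left[of "- smult (Bf (D - 1)) (pW (D - 1))" "[:Af D, 1:] * pW D"] d1 d2
    by simp
  then have Tne: "Tp \<noteq> 0" by auto
  have pT: "poly Tp l = (l + Af D) * Wq l D - Bf (D - 1) * Wq l (D - 1)" for l
    by (simp add: Tp_def poly_pW algebra_simps)
  have "{\<theta>. adj_eigenvalue V E \<theta>} \<subseteq> uminus ` {l. poly Tp l = 0}"
  proof
    fix \<theta> assume "\<theta> \<in> {\<theta>. adj_eigenvalue V E \<theta>}"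
    then obtain f x where x: "x \<in> V" "f x \<noteq> 0" and eig: "\<forall>z\<in>V. (\<Sum>t\<in>nb z. f t) = \<theta> * f z"
      unfolding adj_eigenvalue_def by blast
    have "(-\<theta> + Af D) * Wq (-\<theta>) D * f x = Bf (D - 1) * Wq (-\<theta>) (D - 1) * f x"
      using terminal[OF eig x(1)] .
    then have "((-\<theta> + Af D) * Wq (-\<theta>) D - Bf (D - 1) * Wq (-\<theta>) (D - 1)) * f x = 0"
      by (simp add: algebra_simps)
    then have "poly Tp (-\<theta>) = 0" using x(2) pT by simp
    then show "\<theta> \<in> uminus ` {l. poly Tp l = 0}" by (metis (mono_tags) image_eqI mem_Collect_eq minus_minus)
  qed
  moreover have "finite (uminus ` {l. poly Tp l = 0})" using poly_roots_finite[OF Tne] by simp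
  ultimately show ?thesis by (rule finite_subset)
qed

fun uu :: "nat \<Rightarrow> real" where
  "uu 0 = 1"
| "uu (Suc i) = uu i * (-(1 + \<alpha> * g i) / (\<beta> - \<alpha> * g i))"

lemma uu_ident: "i \<le> D \<Longrightarrow> Cf i * uu (i - 1) + Af i * uu i + Bf i * uu (i + 1) = -R * uu i"
proof (cases i)
  case 0
  then show ?thesis using beta_pos by (simp add: Cf_def Af_def Bf_def)
next
  case (Suc j)
  assume iD: "i \<le> D"
  define r0 where "r0 = -(1 + \<alpha> * g j) / (\<beta> - \<alpha> * g j)"
  define r1 where "r1 = -(1 + \<alpha> * g (Suc j)) / (\<beta> - \<alpha> * g (Suc j))"
  have u1: "uu (Suc j) = uu j * r0" by (simp add: r0_def)
  have u2: "uu (Suc (Suc j)) = uu j * r0 * r1" by (simp add: r0_def r1_def)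
  have X: "\<beta> - \<alpha> * g j > 0" using beta_big[of j] Suc iD by simp
  have key: "Bf (Suc j) * r1 = -(R - g (Suc j)) * (1 + \<alpha> * g (Suc j))"
  proof (cases "Suc j < D")
    case True
    then have "\<beta> - \<alpha> * g (Suc j) > 0" using beta_big by blast
    then show ?thesis by (simp add: Bf_def r1_def field_simps)
  next
    case False
    then have "Suc j = D" using Suc iD by simp
    then have "R - g (Suc j) = 0" by (simp add: R_def)
    then show ?thesis by (simp add: Bf_def)
  qed
  have main: "Cf (Suc j) + Af (Suc j) * r0 + (Bf (Suc j) * r1) * r0 = -R * r0"
  proof -
    have Xne: "\<beta> - \<alpha> * g j \<noteq> 0" using X by simp
    have r0X0: "r0 * (\<beta> - \<alpha> * g j) = - (1 + \<alpha> * g j)"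
      unfolding r0_def using Xne by simp
    have r0X: "r0 * (g (Suc j) * (\<beta> - \<alpha> * g j)) = - (g (Suc j) * (1 + \<alpha> * g j))"
    proof -
      have "r0 * (g (Suc j) * (\<beta> - \<alpha> * g j)) = g (Suc j) * (r0 * (\<beta> - \<alpha> * g j))"
        by (simp only: ac_simps)
      also have "\<dots> = g (Suc j) * (- (1 + \<alpha> * g j))" by (simp only: r0X0)
      finally show ?thesis by (simp only: mult_minus_right)
    qed
    have T: "Af (Suc j) - (R - g (Suc j)) * (1 + \<alpha> * g (Suc j)) + R = g (Suc j) * (\<beta> - \<alpha> * g j)"
      by (simp add: Af_def Bf_def Cf_def algebra_simps)
    have "Cf (Suc j) + Af (Suc j) * r0 + (-(R - g (Suc j)) * (1 + \<alpha> * g (Suc j))) * r0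
        = Cf (Suc j) + r0 * (Af (Suc j) - (R - g (Suc j)) * (1 + \<alpha> * g (Suc j)) + R) - R * r0"
      by (simp add: algebra_simps)
    also have "\<dots> = -R * r0" unfolding T r0X by (simp add: Cf_def)
    finally show ?thesis using key by simp
  qed
  have "Cf i * uu (i - 1) + Af i * uu i + Bf i * uu (i + 1)
      = uu j * (Cf (Suc j) + Af (Suc j) * r0 + (Bf (Suc j) * r1) * r0)"
    using Suc u1 u2 by (simp add: algebra_simps)
  also have "\<dots> = -R * uu i" using main Suc u1 by simp
  finally show ?thesis .
qed

lemma eig_u: "x \<in> V \<Longrightarrow> \<forall>z\<in>V. (\<Sum>t\<in>nb z. uu (d x t)) = -R * uu (d x z)"
proof
  fix z assume x: "x \<in> V" and z: "z \<in> V"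
  let ?i = "d x z"
  have iD: "?i \<le> D" using d_le_D[OF x z] .
  have "(\<Sum>t\<in>nb z. uu (d x t)) = real (ci ?i) * uu (?i - 1)
           + (real kk - real (bi ?i) - real (ci ?i)) * uu ?i + real (bi ?i) * uu (?i + 1)"
    by (rule nb_split[OF x z refl])
  also have "\<dots> = Cf ?i * uu (?i - 1) + Af ?i * uu ?i + Bf ?i * uu (?i + 1)"
    using ci_f[OF iD] bi_f[OF iD] Af_real[OF iD] by simp
  also have "\<dots> = -R * uu ?i" using uu_ident[OF iD] .
  finally show "(\<Sum>t\<in>nb z. uu (d x t)) = -R * uu (d x z)" .
qed

lemma min_eig: "min_eigenvalue V E = -R"
proof -
  obtain x where x: "x \<in> V" using Vne by blast
  have "adj_eigenvalue V E (-R)"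
    unfolding adj_eigenvalue_def
  proof (rule exI[of _ "\<lambda>z. uu (d x z)"], rule conjI)
    show "\<exists>xa\<in>V. uu (d x xa) \<noteq> 0" using x by (intro bexI[of _ x]) auto
  qed (use eig_u[OF x] in auto)
  then show ?thesis unfolding min_eigenvalue_def
    using eig_finite eig_ge by (intro Min_eqI) auto
qed

end

locale geo = cls V E bi ci D b \<alpha> \<beta> for V :: "'a set" and E bi ci D b \<alpha> \<beta> +
  fixes \<C> :: "'a set set"
  assumes geo: "geometric V E (bi 0) \<C>" and pasch: "dual_pasch V E \<C>"
begin

lemma line_clique: "L \<in> \<C> \<Longrightarrow> is_clique V E L"
  using geo by (simp add: geometric_def delsarte_clique_def)
lemma line_sub: "L \<in> \<C> \<Longrightarrow> L \<subseteq> V" using line_clique by (simp add: is_clique_def)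
lemma line_fin: "L \<in> \<C> \<Longrightarrow> finite L" using line_sub finV finite_subset by blast
lemma line_E: "L \<in> \<C> \<Longrightarrow> x \<in> L \<Longrightarrow> y \<in> L \<Longrightarrow> x \<noteq> y \<Longrightarrow> E x y"
  using line_clique by (simp add: is_clique_def)
lemma line_card: "L \<in> \<C> \<Longrightarrow> real (card L) = 1 + \<beta>"
proof -
  assume L: "L \<in> \<C>"
  then have "real (card L) = 1 + real kk / (- min_eigenvalue V E)"
    using geo by (simp add: geometric_def delsarte_clique_def kk_def)
  also have "\<dots> = 1 + \<beta>" using min_eig kk_f R_gt1 by simp
  finally show ?thesis .
qed
lemma line_ex1: "E x y \<Longrightarrow> \<exists>!L. L \<in> \<C> \<and> x \<in> L \<and> y \<in> L"
  using geo by (simp add: geometric_def)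
lemma line_uniq: "L1 \<in> \<C> \<Longrightarrow> L2 \<in> \<C> \<Longrightarrow> x \<in> L1 \<Longrightarrow> y \<in> L1 \<Longrightarrow> x \<in> L2 \<Longrightarrow> y \<in> L2 \<Longrightarrow> x \<noteq> y \<Longrightarrow> L1 = L2"
  using line_ex1 line_E by blast
lemma lt: "E x y \<Longrightarrow> line_through \<C> x y \<in> \<C> \<and> x \<in> line_through \<C> x y \<and> y \<in> line_through \<C> x y"
  unfolding line_through_def using theI'[OF line_ex1] by blast
lemma lt_eq: "L \<in> \<C> \<Longrightarrow> x \<in> L \<Longrightarrow> y \<in> L \<Longrightarrow> x \<noteq> y \<Longrightarrow> line_through \<C> x y = L"
  using lt line_uniq line_E by blast
lemma C_fin: "finite \<C>"
proof -
  have "\<C> \<subseteq> Pow V" using line_sub by blast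
  then show ?thesis using finV finite_subset by blast
qed

lemma nb_lines: "x \<in> V \<Longrightarrow> nb x = (\<Union>L\<in>{L\<in>\<C>. x \<in> L}. L - {x})"
proof
  assume x: "x \<in> V"
  show "nb x \<subseteq> (\<Union>L\<in>{L\<in>\<C>. x \<in> L}. L - {x})"
  proof
    fix y assume "y \<in> nb x"
    then have e: "E x y" by simp
    then obtain L where "L \<in> \<C>" "x \<in> L" "y \<in> L" using line_ex1 by blast
    moreover have "y \<noteq> x" using e Eirr by blast
    ultimately show "y \<in> (\<Union>L\<in>{L\<in>\<C>. x \<in> L}. L - {x})" by blast
  qed
  show "(\<Union>L\<in>{L\<in>\<C>. x \<in> L}. L - {x}) \<subseteq> nb x"
    using line_E line_sub by blast
qed

lemma card_lines: "x \<in> V \<Longrightarrow> real (card {L\<in>\<C>. x \<in> L}) = R"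
proof -
  assume x: "x \<in> V"
  let ?Lx = "{L\<in>\<C>. x \<in> L}"
  have fin: "finite ?Lx" using C_fin by simp
  have "card (nb x) = (\<Sum>L\<in>?Lx. card (L - {x}))"
    unfolding nb_lines[OF x]
  proof (rule card_UN_disjoint[OF fin])
    show "\<forall>i\<in>?Lx. finite (i - {x})" using line_fin by blast
    show "\<forall>i\<in>?Lx. \<forall>j\<in>?Lx. i \<noteq> j \<longrightarrow> (i - {x}) \<inter> (j - {x}) = {}"
      using line_uniq by blast
  qed
  then have "real kk = (\<Sum>L\<in>?Lx. real (card (L - {x})))" using card_nb[OF x] by simp
  also have "\<dots> = (\<Sum>L\<in>?Lx. \<beta>)"
  proof (rule sum.cong)
    fix L assume L: "L \<in> ?Lx"
    then have "card L > 0" using line_fin[of L] card_gt_0_iff by blast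
    then show "real (card (L - {x})) = \<beta>" using line_card[of L] line_fin[of L] L
      by (simp add: card_Diff_singleton of_nat_diff)
  qed simp
  finally have "R * \<beta> = real (card ?Lx) * \<beta>" using kk_f by simp
  then show ?thesis using beta_pos by simp
qed

lemma swapLV: "(\<Sum>L\<in>\<C>. \<Sum>z\<in>L. h L z) = (\<Sum>z\<in>V. \<Sum>L\<in>{L\<in>\<C>. z \<in> L}. h L z)"
proof -
  have "(\<Sum>L\<in>\<C>. \<Sum>z\<in>L. h L z) = (\<Sum>L\<in>\<C>. \<Sum>z\<in>{z\<in>V. z \<in> L}. h L z)"
  proof (rule sum.cong)
    fix L assume "L \<in> \<C>"
    then have "{z\<in>V. z \<in> L} = L" using line_sub by blast
    then show "(\<Sum>z\<in>L. h L z) = (\<Sum>z\<in>{z\<in>V. z \<in> L}. h L z)" by simp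
  qed simp
  also have "\<dots> = (\<Sum>z\<in>V. \<Sum>L\<in>{L\<in>\<C>. z \<in> L}. h L z)"
    by (rule sum.swap_restrict[OF C_fin finV])
  finally show ?thesis .
qed

lemma line_sum_zero:
  assumes eig: "\<forall>z\<in>V. (\<Sum>t\<in>nb z. f t) = -R * f z" and L: "L \<in> \<C>"
  shows "(\<Sum>z\<in>L. f z) = 0"
proof -
  have sq: "(\<Sum>z\<in>L. f z)^2 = (\<Sum>z\<in>L. f z * f z) + (\<Sum>z\<in>L. f z * (\<Sum>t\<in>L - {z}. f t))"
    if L: "L \<in> \<C>" for L
  proof -
    have "(\<Sum>z\<in>L. f z)^2 = (\<Sum>z\<in>L. f z * (\<Sum>t\<in>L. f t))"
      by (simp add: power2_eq_square sum_distrib_right)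
    also have "\<dots> = (\<Sum>z\<in>L. f z * f z + f z * (\<Sum>t\<in>L - {z}. f t))"
    proof (rule sum.cong)
      fix z assume "z \<in> L"
      then have "(\<Sum>t\<in>L. f t) = f z + (\<Sum>t\<in>L - {z}. f t)"
        using line_fin[OF L] by (simp add: sum.remove)
      then show "f z * (\<Sum>t\<in>L. f t) = f z * f z + f z * (\<Sum>t\<in>L - {z}. f t)"
        by (simp add: algebra_simps)
    qed simp
    finally show ?thesis by (simp add: sum.distrib)
  qed
  have t1: "(\<Sum>L\<in>\<C>. \<Sum>z\<in>L. f z * f z) = R * (\<Sum>z\<in>V. f z * f z)"
  proof -
    have "(\<Sum>L\<in>\<C>. \<Sum>z\<in>L. f z * f z) = (\<Sum>z\<in>V. \<Sum>L\<in>{L\<in>\<C>. z \<in> L}. f z * f z)"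
      by (rule swapLV)
    also have "\<dots> = (\<Sum>z\<in>V. R * (f z * f z))"
      by (rule sum.cong) (simp_all add: card_lines)
    finally show ?thesis by (simp add: sum_distrib_left)
  qed
  have t2: "(\<Sum>L\<in>\<C>. \<Sum>z\<in>L. f z * (\<Sum>t\<in>L - {z}. f t)) = -R * (\<Sum>z\<in>V. f z * f z)"
  proof -
    have "(\<Sum>L\<in>\<C>. \<Sum>z\<in>L. f z * (\<Sum>t\<in>L - {z}. f t))
        = (\<Sum>z\<in>V. \<Sum>L\<in>{L\<in>\<C>. z \<in> L}. f z * (\<Sum>t\<in>L - {z}. f t))"
      by (rule swapLV)
    also have "\<dots> = (\<Sum>z\<in>V. f z * (\<Sum>t\<in>nb z. f t))"
    proof (rule sum.cong)
      fix z assume z: "z \<in> V"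
      have "(\<Sum>t\<in>nb z. f t) = (\<Sum>L\<in>{L\<in>\<C>. z \<in> L}. \<Sum>t\<in>L - {z}. f t)"
        unfolding nb_lines[OF z]
      proof (rule sum.UNION_disjoint)
        show "finite {L\<in>\<C>. z \<in> L}" using C_fin by simp
        show "\<forall>L\<in>{L\<in>\<C>. z \<in> L}. finite (L - {z})" using line_fin by blast
        show "\<forall>L1\<in>{L\<in>\<C>. z \<in> L}. \<forall>L2\<in>{L\<in>\<C>. z \<in> L}. L1 \<noteq> L2 \<longrightarrow> (L1 - {z}) \<inter> (L2 - {z}) = {}"
          using line_uniq by blast
      qed
      then show "(\<Sum>L\<in>{L\<in>\<C>. z \<in> L}. f z * (\<Sum>t\<in>L - {z}. f t)) = f z * (\<Sum>t\<in>nb z. f t)"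
        by (simp add: sum_distrib_left)
    qed simp
    also have "\<dots> = (\<Sum>z\<in>V. -R * (f z * f z))"
      using eig by (intro sum.cong) auto
    finally show ?thesis by (simp add: sum_distrib_left)
  qed
  have "(\<Sum>L\<in>\<C>. (\<Sum>z\<in>L. f z)^2) = (\<Sum>L\<in>\<C>. (\<Sum>z\<in>L. f z * f z) + (\<Sum>z\<in>L. f z * (\<Sum>t\<in>L - {z}. f t)))"
    using sq by (intro sum.cong) auto
  also have "\<dots> = 0" using t1 t2 by (simp add: sum.distrib)
  finally have "(\<Sum>L\<in>\<C>. (\<Sum>z\<in>L. f z)^2) = 0" .
  then have "\<forall>L\<in>\<C>. (\<Sum>z\<in>L. f z)^2 = 0"
    using sum_nonneg_eq_0_iff[OF C_fin, of "\<lambda>L. (\<Sum>z\<in>L. f z)^2"] by simp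
  then show ?thesis using L by simp
qed

lemma uu1: "uu 1 = -(1/\<beta>)" by simp
lemma uu2: "uu 2 = (1/\<beta>) * ((1 + \<alpha>) / (\<beta> - \<alpha>))"
proof -
  have "uu 2 = uu 1 * (-(1 + \<alpha> * g 1) / (\<beta> - \<alpha> * g 1))" by (simp add: numeral_2_eq_2)
  also have "\<dots> = -(1/\<beta>) * (-(1 + \<alpha>) / (\<beta> - \<alpha>))" using g1 by simp
  also have "\<dots> = (1/\<beta>) * ((1 + \<alpha>) / (\<beta> - \<alpha>))" by (simp add: diff_divide_distrib add_divide_distrib)
  finally show ?thesis .
qed

lemma psi1:
  assumes L: "L \<in> \<C>" and w: "w \<in> V" "w \<notin> L" and p: "p \<in> L" "E w p"
  shows "real (card {z\<in>L. E w z}) = 1 + \<alpha>"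
proof -
  let ?L1 = "{z\<in>L. E w z}"
  have fL: "finite L" using line_fin[OF L] .
  have sub: "?L1 \<subseteq> L" by auto
  have z0: "(\<Sum>z\<in>L. uu (d w z)) = 0"
    using line_sum_zero[OF eig_u[OF w(1)] L] .
  have on1: "(\<Sum>z\<in>?L1. uu (d w z)) = real (card ?L1) * uu 1"
  proof -
    have "(\<Sum>z\<in>?L1. uu (d w z)) = (\<Sum>z\<in>?L1. uu 1)" using d_E by (intro sum.cong) auto
    then show ?thesis by simp
  qed
  have on2: "(\<Sum>z\<in>L - ?L1. uu (d w z)) = real (card (L - ?L1)) * uu 2"
  proof -
    have "(\<Sum>z\<in>L - ?L1. uu (d w z)) = (\<Sum>z\<in>L - ?L1. uu 2)"
    proof (rule sum.cong)
      fix z assume z: "z \<in> L - ?L1"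
      then have zp: "z \<noteq> p" using p by auto
      then have "E p z" using line_E[OF L p(1)] z by auto
      then have "d w z \<le> d w p + 1" using d_step[OF w(1)] by blast
      moreover have "d w p = 1" using d_E[OF p(2)] .
      moreover have "d w z \<noteq> 0" using d0[OF w(1)] z w(2) line_sub[OF L] by auto
      moreover have "d w z \<noteq> 1" using d1_E[of w z] z w(1) line_sub[OF L] by auto
      ultimately have "d w z = 2" by simp
      then show "uu (d w z) = uu 2" by simp
    qed simp
    then show ?thesis by simp
  qed
  have "(\<Sum>z\<in>L. uu (d w z)) = (\<Sum>z\<in>L - ?L1. uu (d w z)) + (\<Sum>z\<in>?L1. uu (d w z))"
    by (rule sum.subset_diff[OF sub fL])
  then have eq: "real (card (L - ?L1)) * uu 2 + real (card ?L1) * uu 1 = 0" using z0 on1 on2 by simp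
  have "real (card (L - ?L1)) = real (card L) - real (card ?L1)"
    using card_Diff_subset[OF finite_subset[OF sub fL] sub] card_mono[OF fL sub] by (simp add: of_nat_diff)
  then have cd: "real (card (L - ?L1)) = 1 + \<beta> - real (card ?L1)" using line_card[OF L] by simp
  define n where "n = real (card ?L1)"
  have bp: "\<beta> > 0" using beta_pos .
  have ba: "\<beta> - \<alpha> > 0" using beta_big[of 1] D3 g1 by simp
  define ib where "ib = 1/\<beta>"
  define q where "q = (1 + \<alpha>) / (\<beta> - \<alpha>)"
  have ibne: "ib \<noteq> 0" using bp by (simp add: ib_def)
  have qba: "q * (\<beta> - \<alpha>) = 1 + \<alpha>" using ba by (simp add: q_def)
  have eq2: "(1 + \<beta> - n) * (ib * q) + n * (- ib) = 0"
    using eq cd uu1 uu2 by (simp add: n_def ib_def q_def)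
  then have "ib * ((1 + \<beta> - n) * q - n) = 0" by (simp add: algebra_simps)
  then have e3: "(1 + \<beta> - n) * q - n = 0" using ibne by simp
  have "(1 + \<beta> - n) * (1 + \<alpha>) - n * (\<beta> - \<alpha>) = (1 + \<beta> - n) * (q * (\<beta> - \<alpha>)) - n * (\<beta> - \<alpha>)"
    by (simp only: qba)
  also have "\<dots> = ((1 + \<beta> - n) * q - n) * (\<beta> - \<alpha>)" by (simp add: algebra_simps)
  finally have "(1 + \<beta> - n) * (1 + \<alpha>) - n * (\<beta> - \<alpha>) = 0" using e3 by simp
  then have "(n - (1 + \<alpha>)) * (1 + \<beta>) = 0" by (simp add: algebra_simps)
  then have "n = 1 + \<alpha>" using bp by simp
  then show ?thesis by (simp add: n_def)
qed

definition cF where "cF = (\<Sum>i\<le>D. uu i * ((-1)^i * Wq R i))"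

lemma F_eig:
  assumes eig: "\<forall>z\<in>V. (\<Sum>t\<in>nb z. w t) = -R * w z" and x: "x \<in> V"
  shows "(\<Sum>z\<in>V. uu (d x z) * w z) = cF * w x"
proof -
  have "(\<Sum>z\<in>V. uu (d x z) * w z) = (\<Sum>i\<in>{..D}. \<Sum>z\<in>{z\<in>V. d x z = i}. uu (d x z) * w z)"
    by (rule sum.group[symmetric]) (use finV d_le_D[OF x] in auto)
  also have "\<dots> = (\<Sum>i\<in>{..D}. uu i * Ssum w x i)"
  proof (rule sum.cong)
    fix i
    have "(\<Sum>z\<in>{z\<in>V. d x z = i}. uu (d x z) * w z) = (\<Sum>z\<in>{z\<in>V. d x z = i}. uu i * w z)"
      by (rule sum.cong) auto
    then show "(\<Sum>z\<in>{z\<in>V. d x z = i}. uu (d x z) * w z) = uu i * Ssum w x i"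
      by (simp add: Ssum_def sph_def sum_distrib_left)
  qed simp
  also have "\<dots> = (\<Sum>i\<in>{..D}. uu i * ((-1)^i * Wq R i) * w x)"
  proof (rule sum.cong)
    fix i assume "i \<in> {..D}"
    then have "Ssum w x i = (-1)^i * Wq (- (-R)) i * w x" using S_W[OF eig x] by simp
    then show "uu i * Ssum w x i = uu i * ((-1)^i * Wq R i) * w x" by simp
  qed simp
  also have "\<dots> = cF * w x" by (simp add: cF_def sum_distrib_right)
  finally show ?thesis .
qed

lemma cF_ge1: "cF \<ge> 1"
proof -
  obtain x where x: "x \<in> V" using Vne by blast
  have "(\<Sum>z\<in>V. uu (d x z) * uu (d x z)) = cF * uu (d x x)" using F_eig[OF eig_u[OF x] x] .
  then have e: "(\<Sum>z\<in>V. uu (d x z) * uu (d x z)) = cF" by simp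
  have "uu (d x x) * uu (d x x) \<le> (\<Sum>z\<in>V. uu (d x z) * uu (d x z))"
    by (rule member_le_sum) (use x finV in auto)
  then show ?thesis using e by simp
qed

lemma delsarte_bound:
  assumes K: "K \<subseteq> V" and cl: "\<forall>x\<in>K. \<forall>y\<in>K. x \<noteq> y \<longrightarrow> E x y"
  shows "real (card K) \<le> 1 + \<beta>"
proof -
  have fK: "finite K" using K finV finite_subset by blast
  define gK where "gK z = (\<Sum>y\<in>K. uu (d y z))" for z
  have eigK: "\<forall>z\<in>V. (\<Sum>t\<in>nb z. gK t) = -R * gK z"
  proof
    fix z assume z: "z \<in> V"
    have "(\<Sum>t\<in>nb z. gK t) = (\<Sum>y\<in>K. \<Sum>t\<in>nb z. uu (d y t))"
      unfolding gK_def by (rule sum.swap)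
    also have "\<dots> = (\<Sum>y\<in>K. -R * uu (d y z))"
      using eig_u K z by (intro sum.cong) auto
    finally show "(\<Sum>t\<in>nb z. gK t) = -R * gK z" by (simp add: gK_def sum_distrib_left)
  qed
  have "cF * (\<Sum>x\<in>K. gK x) = (\<Sum>x\<in>K. \<Sum>z\<in>V. uu (d x z) * gK z)"
    using F_eig[OF eigK] K by (simp add: sum_distrib_left subset_iff)
  also have "\<dots> = (\<Sum>z\<in>V. \<Sum>x\<in>K. uu (d x z) * gK z)" by (rule sum.swap)
  also have "\<dots> = (\<Sum>z\<in>V. gK z * gK z)" by (simp add: gK_def sum_distrib_right)
  also have "\<dots> \<ge> 0" by (simp add: sum_nonneg)
  finally have nn: "cF * (\<Sum>x\<in>K. gK x) \<ge> 0" .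
  have cKx: "gK x = 1 - (real (card K) - 1) / \<beta>" if x: "x \<in> K" for x
  proof -
    have "gK x = uu (d x x) + (\<Sum>y\<in>K - {x}. uu (d y x))"
      unfolding gK_def using x fK by (simp add: sum.remove)
    also have "(\<Sum>y\<in>K - {x}. uu (d y x)) = (\<Sum>y\<in>K - {x}. uu 1)"
      using cl x d_E by (intro sum.cong) auto
    finally have "gK x = 1 + real (card (K - {x})) * (-1/\<beta>)" by simp
    moreover have "real (card (K - {x})) = real (card K) - 1"
    proof -
      have "card K > 0" using x fK card_gt_0_iff by blast
      then show ?thesis using x fK by (simp add: card_Diff_singleton of_nat_diff)
    qed
    ultimately show ?thesis by simp
  qed
  have "(\<Sum>x\<in>K. gK x) = real (card K) * (1 - (real (card K) - 1) / \<beta>)"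
    using cKx by simp
  then have "real (card K) * (1 - (real (card K) - 1) / \<beta>) \<ge> 0"
    using nn cF_ge1 by (simp add: zero_le_mult_iff)
  then show ?thesis
  proof (cases "card K = 0")
    case True then show ?thesis using beta_pos by simp
  next
    case False
    then have "1 - (real (card K) - 1) / \<beta> \<ge> 0"
      using \<open>real (card K) * _ \<ge> 0\<close> by (simp add: zero_le_mult_iff)
    then show ?thesis using beta_pos by (simp add: field_simps)
  qed
qed

lemma clique_E: "is_clique V E S \<Longrightarrow> a \<in> S \<Longrightarrow> c \<in> S \<Longrightarrow> a \<noteq> c \<Longrightarrow> E a c"
  unfolding is_clique_def by blast

lemma clique_V: "is_clique V E S \<Longrightarrow> a \<in> S \<Longrightarrow> a \<in> V"
  unfolding is_clique_def by blast

lemma pasch_cl: "E x y \<Longrightarrow> is_clique V E {z\<in>V. E x z \<and> E y z \<and> z \<notin> line_through \<C> x y}"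
  using pasch unfolding dual_pasch_def by simp

lemma T_sub_aux:
  assumes L: "L \<in> \<C>" and u: "u \<in> L" and wL: "w \<notin> L" and w'L: "w' \<notin> L"
    and uw: "E u w" and uw': "E u w'" and ww': "E w w'" and nl: "w' \<notin> line_through \<C> u w"
  shows "{z\<in>L. E w z} \<subseteq> {z\<in>L. E w' z}"
proof
  fix z assume z: "z \<in> {z\<in>L. E w z}"
  then have zL: "z \<in> L" and wz: "E w z" by auto
  show "z \<in> {z\<in>L. E w' z}"
  proof (cases "z = u")
    case True
    then have "E w' z" using Esym[OF uw'] by simp
    then show ?thesis using zL by blast
  next
    case False
    define L1 where "L1 = line_through \<C> u w"
    have L1: "L1 \<in> \<C>" "u \<in> L1" "w \<in> L1" using lt[OF uw] by (auto simp: L1_def)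
    have cl: "is_clique V E {t\<in>V. E u t \<and> E w t \<and> t \<notin> L1}"
      using pasch_cl[OF uw] unfolding L1_def .
    have w'V: "w' \<in> V" using EV[OF ww'] by blast
    have w'in: "w' \<in> {t\<in>V. E u t \<and> E w t \<and> t \<notin> L1}"
      using uw' ww' nl w'V by (simp add: L1_def)
    have zL1: "z \<notin> L1"
    proof
      assume zL1: "z \<in> L1"
      have "u \<noteq> z" using False by blast
      then have "L1 = L" using line_uniq[OF L1(1) L L1(2) zL1 u zL] by blast
      then show False using L1(3) wL by simp
    qed
    have zV: "z \<in> V" using zL line_sub[OF L] by blast
    have uz: "E u z" using line_E[OF L u zL] False by simp
    have zin: "z \<in> {t\<in>V. E u t \<and> E w t \<and> t \<notin> L1}"
      using zV uz wz zL1 by simp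
    have "w' \<noteq> z" using zL w'L by blast
    then have "E w' z" using clique_E[OF cl w'in zin] by simp
    then show ?thesis using zL by blast
  qed
qed

lemma edge_assembly:
  assumes e: "E x y"
  shows "\<exists>M. assembly V E \<C> M \<and> x \<in> M \<and> y \<in> M \<and> real (card M) = \<alpha> * R + 1 \<and>
           (\<forall>M'. assembly V E \<C> M' \<and> x \<in> M' \<and> y \<in> M' \<longrightarrow> M' = M)"
proof -
  define L where "L = line_through \<C> x y"
  have L: "L \<in> \<C>" "x \<in> L" "y \<in> L" using lt[OF e] by (auto simp: L_def)
  have xy: "x \<noteq> y" using e Eirr by blast
  have xV: "x \<in> V" and yV: "y \<in> V" using EV[OF e] by auto
  define N where "N = {z\<in>V. E x z \<and> E y z \<and> z \<notin> L}"
  have Ncl: "is_clique V E N" using pasch_cl[OF e] unfolding N_def L_def .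
  have fL: "finite L" using line_fin[OF L(1)] .
  have fN: "finite N" using finV by (simp add: N_def)
  have com: "{z\<in>V. E y z \<and> d x z = 1} = (L - {x, y}) \<union> N"
  proof
    show "{z\<in>V. E y z \<and> d x z = 1} \<subseteq> (L - {x, y}) \<union> N"
    proof
      fix z assume z: "z \<in> {z\<in>V. E y z \<and> d x z = 1}"
      then have "E x z" using d1_E xV by auto
      then show "z \<in> (L - {x, y}) \<union> N" using z Eirr by (auto simp: N_def)
    qed
    show "(L - {x, y}) \<union> N \<subseteq> {z\<in>V. E y z \<and> d x z = 1}"
    proof
      fix z assume z: "z \<in> (L - {x, y}) \<union> N"
      then have "E x z \<and> E y z \<and> z \<in> V"
        using line_E[OF L(1) L(2)] line_E[OF L(1) L(3)] line_sub[OF L(1)] by (auto simp: N_def)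
      then show "z \<in> {z\<in>V. E y z \<and> d x z = 1}" using d_E by auto
    qed
  qed
  have dis: "(L - {x, y}) \<inter> N = {}" by (auto simp: N_def)
  have "real (card {z\<in>V. E y z \<and> d x z = 1}) = real kk - real (bi 1) - real (ci 1)"
    using cnt_real[OF xV yV, of 1] d_E[OF e] by simp
  also have "\<dots> = Af 1" using Af_real[of 1] D3 by simp
  finally have c1: "real (card (L - {x, y})) + real (card N) = Af 1"
    unfolding com using card_Un_disjoint[OF _ fN dis] fL by simp
  have "card (L - {x, y}) = card L - 2"
    using card_Diff_subset[of "{x,y}" L] L xy fL by simp
  moreover have "card L \<ge> 2"
  proof -
    have "card {x, y} \<le> card L" using card_mono[OF fL] L by simp
    then show ?thesis using xy by simp
  qed
  ultimately have "real (card (L - {x, y})) = real (card L) - 2" by (simp add: of_nat_diff)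
  then have "real (card (L - {x, y})) = \<beta> - 1" using line_card[OF L(1)] by simp
  then have cN: "real (card N) = \<alpha> * (R - 1)"
    using c1 g1 by (simp add: Af_def Bf_def Cf_def algebra_simps)
  have "\<alpha> * (R - 1) > 0" using \<alpha>1 R_gt1 by simp
  then have "N \<noteq> {}" using cN by auto
  then obtain w0 where w0: "w0 \<in> N" by blast
  have w0p: "w0 \<in> V" "E x w0" "E y w0" "w0 \<notin> L" using w0 by (auto simp: N_def)
  define T where "T = {z\<in>L. E w0 z}"
  have cT: "real (card T) = 1 + \<alpha>"
    unfolding T_def using psi1[OF L(1) w0p(1) w0p(4) L(2) Esym[OF w0p(2)]] .
  have xyT: "x \<in> T" "y \<in> T" using L Esym[OF w0p(2)] Esym[OF w0p(3)] by (auto simp: T_def)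
  have TT: "{z\<in>L. E w z} = T" if w: "w \<in> N" for w
  proof -
    have sub: "{z\<in>L. E w1 z} \<subseteq> {z\<in>L. E w2 z}" if w1: "w1 \<in> N" and w2: "w2 \<in> N" for w1 w2
    proof (cases "w1 = w2")
      case True then show ?thesis by simp
    next
      case False
      have ww: "E w1 w2" using clique_E[OF Ncl w1 w2 False] .
      have p1: "E x w1" "E y w1" "w1 \<notin> L" using w1 by (auto simp: N_def)
      have p2: "E x w2" "E y w2" "w2 \<notin> L" using w2 by (auto simp: N_def)
      have "w2 \<notin> line_through \<C> x w1 \<or> w2 \<notin> line_through \<C> y w1"
      proof (rule ccontr)
        assume "\<not> ?thesis"
        then have a: "w2 \<in> line_through \<C> x w1" "w2 \<in> line_through \<C> y w1" by auto
        have l1: "line_through \<C> x w1 \<in> \<C>" "x \<in> line_through \<C> x w1" "w1 \<in> line_through \<C> x w1"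
          using lt[OF p1(1)] by auto
        have l2: "line_through \<C> y w1 \<in> \<C>" "y \<in> line_through \<C> y w1" "w1 \<in> line_through \<C> y w1"
          using lt[OF p1(2)] by auto
        have "line_through \<C> x w1 = line_through \<C> y w1"
          using line_uniq[OF l1(1) l2(1) l1(3) a(1) l2(3) a(2) False] .
        then have "line_through \<C> x w1 = L"
          using line_uniq[OF l1(1) L(1) l1(2) _ L(2) L(3) xy] l2(2) by simp
        then show False using l1(3) p1(3) by simp
      qed
      then show ?thesis
      proof
        assume "w2 \<notin> line_through \<C> x w1"
        then show ?thesis using T_sub_aux[OF L(1) L(2) p1(3) p2(3) p1(1) p2(1) ww] by blast
      next
        assume "w2 \<notin> line_through \<C> y w1"
        then show ?thesis using T_sub_aux[OF L(1) L(3) p1(3) p2(3) p1(2) p2(2) ww] by blast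
      qed
    qed
    show ?thesis unfolding T_def using sub[OF w w0] sub[OF w0 w] by blast
  qed
  define M where "M = N \<union> T"
  have TL: "T \<subseteq> L" by (auto simp: T_def)
  have fT: "finite T" using fL TL finite_subset by blast
  have NT: "N \<inter> T = {}" using TL by (auto simp: N_def)
  have cM: "real (card M) = \<alpha> * R + 1"
    unfolding M_def using card_Un_disjoint[OF fN fT NT] cN cT by (simp add: algebra_simps)
  have MV: "M \<subseteq> V" using TL line_sub[OF L(1)] by (auto simp: M_def N_def)
  have Mcl: "is_clique V E M"
    unfolding is_clique_def
  proof (intro conjI ballI impI)
    show "M \<subseteq> V" by (rule MV)
  next
    fix u v assume u: "u \<in> M" and v: "v \<in> M" and uv: "u \<noteq> v"
    show "E u v"
    proof (cases "u \<in> N")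
      case uN: True
      show ?thesis
      proof (cases "v \<in> N")
        case True show ?thesis using clique_E[OF Ncl uN True uv] by simp
      next
        case False
        then have "v \<in> T" using v by (simp add: M_def)
        then have "v \<in> {z\<in>L. E u z}" using TT[OF uN] by simp
        then show ?thesis by simp
      qed
    next
      case uT: False
      then have uT: "u \<in> T" using u by (simp add: M_def)
      show ?thesis
      proof (cases "v \<in> N")
        case True
        then have "u \<in> {z\<in>L. E v z}" using TT[OF True] uT by simp
        then show ?thesis using Esym by simp
      next
        case False
        then have "v \<in> T" using v by (simp add: M_def)
        then show ?thesis using uT TL line_E[OF L(1) _ _ uv] by blast
      qed
    qed
  qed
  have Mmax: "maximal_clique V E M"
    unfolding maximal_clique_def
  proof (intro conjI allI impI)
    show "is_clique V E M" by (rule Mcl)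
  next
    fix C' assume C': "is_clique V E C' \<and> M \<subseteq> C'"
    have "C' \<subseteq> M"
    proof
      fix v assume v: "v \<in> C'"
      show "v \<in> M"
      proof (rule ccontr)
        assume vM: "v \<notin> M"
        have "x \<in> C'" "y \<in> C'" "w0 \<in> C'" using C' xyT w0 by (auto simp: M_def)
        moreover have "v \<noteq> x" "v \<noteq> y" "v \<noteq> w0" using vM xyT w0 by (auto simp: M_def)
        ultimately have ev: "E x v" "E y v" "E w0 v" "v \<in> V"
          using C' v clique_E[of C'] clique_V[of C'] by blast+
        show False
        proof (cases "v \<in> L")
          case True
          then have "v \<in> T" using ev by (simp add: T_def)
          then show False using vM by (simp add: M_def)
        next
          case False
          then have "v \<in> N" using ev by (simp add: N_def)
          then show False using vM by (simp add: M_def)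
        qed
      qed
    qed
    then show "C' = M" using C' by blast
  qed
  have MnC: "M \<notin> \<C>"
  proof
    assume MC: "M \<in> \<C>"
    have xM: "x \<in> M" and yM: "y \<in> M" using xyT by (auto simp: M_def)
    have "M = L" using line_uniq[OF MC L(1) xM yM L(2) L(3) xy] .
    then have "w0 \<in> L" using w0 by (auto simp: M_def)
    then show False using w0p(4) by simp
  qed
  have asm: "assembly V E \<C> M" using Mmax MnC by (simp add: assembly_def)
  have uniq: "M' = M" if M': "assembly V E \<C> M'" "x \<in> M'" "y \<in> M'" for M'
  proof -
    have M'cl: "is_clique V E M'" and M'max: "\<forall>C'. is_clique V E C' \<and> M' \<subseteq> C' \<longrightarrow> C' = M'"
      and M'nC: "M' \<notin> \<C>"
      using M'(1) by (auto simp: assembly_def maximal_clique_def)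
    have sub: "M' \<subseteq> L \<union> N"
    proof
      fix v assume v: "v \<in> M'"
      show "v \<in> L \<union> N"
      proof (cases "v = x \<or> v = y")
        case True then show ?thesis using L by auto
      next
        case False
        then have "E x v" "E y v" "v \<in> V" using clique_E[OF M'cl M'(2) v] clique_E[OF M'cl M'(3) v] clique_V[OF M'cl v] by auto
        then show ?thesis by (auto simp: N_def)
      qed
    qed
    have "\<not> M' \<subseteq> L"
    proof
      assume "M' \<subseteq> L"
      then have "L = M'" using M'max line_clique[OF L(1)] by blast
      then show False using M'nC L(1) by simp
    qed
    then obtain w where w: "w \<in> M'" "w \<notin> L" by blast
    then have wN: "w \<in> N" using sub by blast
    have "M' \<subseteq> M"
    proof
      fix v assume v: "v \<in> M'"
      show "v \<in> M"
      proof (cases "v \<in> N")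
        case True then show ?thesis by (simp add: M_def)
      next
        case False
        then have vL: "v \<in> L" using sub v by blast
        then have "v \<noteq> w" using w by blast
        then have "E w v" using clique_E[OF M'cl w(1) v] by simp
        then have "v \<in> {z\<in>L. E w z}" using vL by simp
        then show ?thesis using TT[OF wN] by (simp add: M_def)
      qed
    qed
    moreover have "is_clique V E M \<and> M' \<subseteq> M \<longrightarrow> M = M'" using M'max by (rule spec)
    ultimately show ?thesis using Mcl by simp
  qed
  have xM: "x \<in> M" and yM: "y \<in> M" using xyT by (auto simp: M_def)
  show ?thesis
  proof (intro exI[of _ M] conjI allI impI)
    show "assembly V E \<C> M" by (rule asm)
    show "x \<in> M" by (rule xM)
    show "y \<in> M" by (rule yM)
    show "real (card M) = \<alpha> * R + 1" by (rule cM)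
    fix M' assume "assembly V E \<C> M' \<and> x \<in> M' \<and> y \<in> M'"
    then show "M' = M" using uniq by blast
  qed
qed

lemma edge_asm:
  assumes e: "E x y"
  obtains M where "assembly V E \<C> M" "x \<in> M" "y \<in> M" "real (card M) = \<alpha> * R + 1"
    "\<And>M'. assembly V E \<C> M' \<Longrightarrow> x \<in> M' \<Longrightarrow> y \<in> M' \<Longrightarrow> M' = M"
proof -
  from edge_assembly[OF e] obtain M where H: "assembly V E \<C> M \<and> x \<in> M \<and> y \<in> M \<and> real (card M) = \<alpha> * R + 1 \<and>
           (\<forall>M'. assembly V E \<C> M' \<and> x \<in> M' \<and> y \<in> M' \<longrightarrow> M' = M)" ..
  show thesis
  proof (rule that)
    show "assembly V E \<C> M" "x \<in> M" "y \<in> M" "real (card M) = \<alpha> * R + 1" using H by simp_all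
    fix M' assume "assembly V E \<C> M'" "x \<in> M'" "y \<in> M'"
    then show "M' = M" using H by simp
  qed
qed

lemma asm_clique: "assembly V E \<C> M \<Longrightarrow> is_clique V E M"
  by (simp add: assembly_def maximal_clique_def)

lemma edge_exists: "\<exists>x y. E x y"
proof -
  obtain x y where x: "x \<in> V" and y: "y \<in> V" and dxy: "d x y = D" using D_attained by blast
  have "d x y = Suc (D - 1)" using dxy D3 by simp
  then obtain z where "z \<in> V" "E z y" using d_pred[OF x y] by blast
  then show ?thesis by blast
qed

lemma count_asm:
  assumes x: "x \<in> V"
  shows "real (card {M. assembly V E \<C> M \<and> x \<in> M}) = \<beta> / \<alpha>"
proof -
  let ?A = "{M. assembly V E \<C> M \<and> x \<in> M}"
  have finA: "finite ?A"
  proof -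
    have "?A \<subseteq> Pow V" using asm_clique clique_V by blast
    then show ?thesis by (rule finite_subset) (simp add: finV)
  qed
  have un: "nb x = (\<Union>M\<in>?A. M - {x})"
  proof
    show "nb x \<subseteq> (\<Union>M\<in>?A. M - {x})"
    proof
      fix y assume "y \<in> nb x"
      then have e: "E x y" by simp
      obtain M where Mq: "assembly V E \<C> M" "x \<in> M" "y \<in> M" "real (card M) = \<alpha> * R + 1"
        "\<And>M'. assembly V E \<C> M' \<Longrightarrow> x \<in> M' \<Longrightarrow> y \<in> M' \<Longrightarrow> M' = M"
        using edge_asm[OF e] by metis
      note Mq(1-3)
      moreover have "y \<noteq> x" using e Eirr by blast
      ultimately show "y \<in> (\<Union>M\<in>?A. M - {x})" by blast
    qed
    show "(\<Union>M\<in>?A. M - {x}) \<subseteq> nb x"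
    proof
      fix y assume "y \<in> (\<Union>M\<in>?A. M - {x})"
      then obtain M where M: "assembly V E \<C> M" "x \<in> M" "y \<in> M" "y \<noteq> x" by blast
      have "E x y" using clique_E[OF asm_clique[OF M(1)] M(2) M(3)] M(4) by simp
      then show "y \<in> nb x" using EV by blast
    qed
  qed
  have "card (nb x) = (\<Sum>M\<in>?A. card (M - {x}))"
    unfolding un
  proof (rule card_UN_disjoint[OF finA])
    show "\<forall>M\<in>?A. finite (M - {x})"
    proof
      fix M assume "M \<in> ?A"
      then have "M \<subseteq> V" using asm_clique clique_V by blast
      then have "finite M" using finite_subset[OF _ finV] by blast
      then show "finite (M - {x})" by simp
    qed
    show "\<forall>M1\<in>?A. \<forall>M2\<in>?A. M1 \<noteq> M2 \<longrightarrow> (M1 - {x}) \<inter> (M2 - {x}) = {}"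
    proof (intro ballI impI)
      fix M1 M2 assume M1: "M1 \<in> ?A" and M2: "M2 \<in> ?A" and ne: "M1 \<noteq> M2"
      show "(M1 - {x}) \<inter> (M2 - {x}) = {}"
      proof (rule ccontr)
        assume "(M1 - {x}) \<inter> (M2 - {x}) \<noteq> {}"
        then obtain y where y: "y \<in> M1" "y \<in> M2" "y \<noteq> x" by blast
        have e: "E x y" using clique_E[of M1 x y] asm_clique M1 y by blast
        obtain M where MM0: "assembly V E \<C> M" "x \<in> M" "y \<in> M" "real (card M) = \<alpha> * R + 1"
      "\<And>M'. assembly V E \<C> M' \<Longrightarrow> x \<in> M' \<Longrightarrow> y \<in> M' \<Longrightarrow> M' = M"
          using edge_asm[OF e] by metis
        note MM = MM0(5)
        have "M1 = M" using MM[of M1] M1 y by blast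
        moreover have "M2 = M" using MM[of M2] M2 y by blast
        ultimately show False using ne by simp
      qed
    qed
  qed
  have cM: "real (card (M - {x})) = \<alpha> * R" if M: "M \<in> ?A" for M
  proof -
    have Ma: "assembly V E \<C> M" "x \<in> M" using M by auto
    have Mcl: "is_clique V E M" using asm_clique[OF Ma(1)] .
    have "\<exists>y\<in>M. y \<noteq> x"
    proof (rule ccontr)
      assume "\<not> (\<exists>y\<in>M. y \<noteq> x)"
      then have Mx: "M = {x}" using Ma(2) by blast
      have "R * \<beta> > 0" using R_gt1 beta_pos by simp
      moreover have "real (card (nb x)) = R * \<beta>" using card_nb[OF x] kk_f by simp
      ultimately have "card (nb x) \<noteq> 0" by linarith
      then have "nb x \<noteq> {}" by (metis card.empty)
      then obtain y0 where y0: "y0 \<in> nb x" by blast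
      have y0': "y0 \<in> V" "E x y0" using y0 by auto
      have cl2: "is_clique V E {x, y0}" using y0' x Esym[OF y0'(2)] unfolding is_clique_def by auto
      have "is_clique V E {x, y0} \<and> M \<subseteq> {x, y0} \<longrightarrow> {x, y0} = M"
        using Ma(1) unfolding assembly_def maximal_clique_def by blast
      then have "{x, y0} = M" using cl2 Mx by blast
      then show False using Mx y0 Eirr by auto
    qed
    then obtain y where y: "y \<in> M" "y \<noteq> x" by blast
    have e: "E x y" using clique_E[OF Mcl Ma(2) y(1)] y(2) by simp
    obtain M0 where M0: "assembly V E \<C> M0" "x \<in> M0" "y \<in> M0" "real (card M0) = \<alpha> * R + 1"
      "\<And>M'. assembly V E \<C> M' \<Longrightarrow> x \<in> M' \<Longrightarrow> y \<in> M' \<Longrightarrow> M' = M0"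
      using edge_asm[OF e] by metis
    have "M = M0" by (rule M0(5)[OF Ma(1) Ma(2) y(1)])
    then have cMM: "real (card M) = \<alpha> * R + 1" using M0(4) by simp
    have "M \<subseteq> V" using Mcl by (simp add: is_clique_def)
    then have fM: "finite M" using finite_subset[OF _ finV] by blast
    have "card M \<noteq> 0" using fM Ma(2) by auto
    then have "card M > 0" by simp
    then show ?thesis using cMM fM Ma(2) by (simp add: card_Diff_singleton of_nat_diff)
  qed
  have "real kk = (\<Sum>M\<in>?A. real (card (M - {x})))"
    using \<open>card (nb x) = _\<close> card_nb[OF x] by simp
  also have "\<dots> = (\<Sum>M\<in>?A. \<alpha> * R)" using cM by (intro sum.cong) auto
  finally have "R * \<beta> = real (card ?A) * (\<alpha> * R)" using kk_f by simp
  then have "\<beta> = real (card ?A) * \<alpha>" using R_gt1 by (simp add: algebra_simps)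
  then show ?thesis using \<alpha>1 by (simp add: field_simps)
qed

lemma final:
  "(\<forall>x y. E x y \<longrightarrow>
        (\<exists>!M. assembly V E \<C> M \<and> x \<in> M \<and> y \<in> M) \<and>
        (\<forall>M. assembly V E \<C> M \<and> x \<in> M \<and> y \<in> M \<longrightarrow> real (card M) = \<alpha> * R + 1))
   \<and> \<beta> \<ge> \<alpha> * R
   \<and> (\<forall>x\<in>V. real (card {M. assembly V E \<C> M \<and> x \<in> M}) = \<beta> / \<alpha>)"
proof (intro conjI allI impI ballI)
  fix x y assume e: "E x y"
  obtain M where M: "assembly V E \<C> M" "x \<in> M" "y \<in> M" "real (card M) = \<alpha> * R + 1"
      "\<And>M'. assembly V E \<C> M' \<Longrightarrow> x \<in> M' \<Longrightarrow> y \<in> M' \<Longrightarrow> M' = M"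
    using edge_asm[OF e] by metis
  show "\<exists>!M. assembly V E \<C> M \<and> x \<in> M \<and> y \<in> M"
  proof (rule ex1I[of _ M])
    show "assembly V E \<C> M \<and> x \<in> M \<and> y \<in> M" using M(1-3) by simp
    fix M' assume "assembly V E \<C> M' \<and> x \<in> M' \<and> y \<in> M'"
    then show "M' = M" using M(5)[of M'] by blast
  qed
  fix M' assume "assembly V E \<C> M' \<and> x \<in> M' \<and> y \<in> M'"
  then have "M' = M" using M(5)[of M'] by blast
  then show "real (card M') = \<alpha> * R + 1" using M(4) by simp
next
  obtain x y where e: "E x y" using edge_exists by blast
  obtain M where M0: "assembly V E \<C> M" "x \<in> M" "y \<in> M" "real (card M) = \<alpha> * R + 1"
      "\<And>M'. assembly V E \<C> M' \<Longrightarrow> x \<in> M' \<Longrightarrow> y \<in> M' \<Longrightarrow> M' = M"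
    using edge_asm[OF e] by metis
  note M = M0(1) M0(4)
  have cl: "is_clique V E M" using asm_clique[OF M(1)] .
  have MV: "M \<subseteq> V" using cl by (simp add: is_clique_def)
  have Mc: "\<forall>a\<in>M. \<forall>c\<in>M. a \<noteq> c \<longrightarrow> E a c" using cl by (simp add: is_clique_def)
  have "real (card M) \<le> 1 + \<beta>" by (rule delsarte_bound[OF MV Mc])
  then show "\<beta> \<ge> \<alpha> * R" using M(2) by simp
next
  fix x assume "x \<in> V"
  then show "real (card {M. assembly V E \<C> M \<and> x \<in> M}) = \<beta> / \<alpha>" by (rule count_asm)
qed

end

theorem proposition23:
  fixes V :: "'a set" and E :: "'a \<Rightarrow> 'a \<Rightarrow> bool"
    and bi ci :: "nat \<Rightarrow> nat" and D :: nat and b :: int and \<alpha> \<beta> :: real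
    and \<C> :: "'a set set"
  assumes cp: "classical_parameters V E bi ci D b \<alpha> \<beta>"
    and b2: "b \<ge> 2" and \<alpha>1: "1 \<le> \<alpha>" and \<alpha>b: "\<alpha> \<le> real_of_int b - 1"
    and D3: "D \<ge> 3"
    and geo: "geometric V E (bi 0) \<C>"
    and pasch: "dual_pasch V E \<C>"
  shows "(\<forall>x y. E x y \<longrightarrow>
            (\<exists>!M. assembly V E \<C> M \<and> x \<in> M \<and> y \<in> M) \<and>
            (\<forall>M. assembly V E \<C> M \<and> x \<in> M \<and> y \<in> M \<longrightarrow>
                 real (card M) = \<alpha> * gbr b D + 1))
         \<and> \<beta> \<ge> \<alpha> * gbr b D
         \<and> (\<forall>x\<in>V. real (card {M. assembly V E \<C> M \<and> x \<in> M}) = \<beta> / \<alpha>)"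
proof -
  have dr: "distance_regular V E bi ci" and diam: "diameter V E = D"
    using cp by (simp_all add: classical_parameters_def)
  interpret G: geo V E bi ci D b \<alpha> \<beta> \<C>
    by (unfold_locales; (rule dr diam cp b2 \<alpha>1 D3 geo pasch)?)
  show ?thesis using G.final by (simp add: G.R_def)
qed

end
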